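(* Let $\mathbf G$ be a group such that $\mathcal G^\pm(\mathbf G)\cong\mathcal G^\pm(\mathbb Q)$, where $\mathbb Q$ denotes the additive group $(\mathbb Q,+)$. Then $\mathbf G\cong(\mathbb Q,+)$.
   Context: For a group $\mathbf G$, the $Z^\pm$-power graph $\mathcal G^\pm(\mathbf G)$ is the simple graph with vertex set $G$ in which distinct $x,y$ are adjacent iff $y=x^n$ or $x=y^n$ for some $n\in\mathbb Z\setminus\{0\}$ (in additive notation: $y=nx$ or $x=ny$). *)

theory Defs
  imports Complex_Main "HOL-Algebra.Group"
begin

definition pm_power_adj :: "('a, 'b) monoid_scheme \<Rightarrow> 'a \<Rightarrow> 'a \<Rightarrow> bool" where
  "pm_power_adj G x y \<longleftrightarrow> x \<in> carrier G \<and> y \<in> carrier G \<and> x \<noteq> y \<and>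
     ((\<exists>n::int. n \<noteq> 0 \<and> y = x [^]\<^bsub>G\<^esub> n) \<or> (\<exists>n::int. n \<noteq> 0 \<and> x = y [^]\<^bsub>G\<^esub> n))"

definition graph_iso :: "'a set \<Rightarrow> ('a \<Rightarrow> 'a \<Rightarrow> bool) \<Rightarrow> 'c set \<Rightarrow> ('c \<Rightarrow> 'c \<Rightarrow> bool) \<Rightarrow> bool" where
  "graph_iso V E W F \<longleftrightarrow> (\<exists>f. bij_betw f V W \<and> (\<forall>x\<in>V. \<forall>y\<in>V. E x y \<longleftrightarrow> F (f x) (f y)))"

definition pm_power_graph_iso :: "('a, 'b) monoid_scheme \<Rightarrow> ('c, 'd) monoid_scheme \<Rightarrow> bool" where
  "pm_power_graph_iso G H \<longleftrightarrow> graph_iso (carrier G) (pm_power_adj G) (carrier H) (pm_power_adj H)"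

definition rat_add_group :: "rat monoid" where
  "rat_add_group = \<lparr>carrier = UNIV, mult = (+), one = 0\<rparr>"

end

theory Submission
  imports Defs "HOL-Computational_Algebra.Primes"
begin

lemma Qg_simps [simp]: "carrier rat_add_group = UNIV" "monoid.mult rat_add_group x y = x + y"
  "one rat_add_group = 0"
  by (simp_all add: rat_add_group_def)

lemma group_Qg: "group rat_add_group"
  by (rule groupI) (auto intro: exI[of _ "- _"])

lemma Qg_inv: "inv\<^bsub>rat_add_group\<^esub> x = - x"
  by (rule group.inv_equality[OF group_Qg]) auto

lemma Qg_nat_pow: "x [^]\<^bsub>rat_add_group\<^esub> (n::nat) = of_nat n * x"
  by (induction n) (auto simp: algebra_simps)

lemma Qg_pow: "x [^]\<^bsub>rat_add_group\<^esub> (n::int) = of_int n * x"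
  by (auto simp: int_pow_def2 Qg_nat_pow Qg_inv)

lemma prime_big: "\<exists>r::int. prime r \<and> r > B"
proof -
  obtain p::nat where "prime p" "p > nat B" using bigger_prime by blast
  thus ?thesis by (intro exI[of _ "int p"]) auto
qed

lemma prime_dvd_cases: "prime (r::int) \<Longrightarrow> d dvd r \<Longrightarrow> \<bar>d\<bar> = 1 \<or> \<bar>d\<bar> = r"
  by (metis abs_dvd_iff abs_ge_zero prime_int_iff zabs_def prime_gt_0_int less_imp_le abs_of_nonneg)

lemma dvd_small: "(r::int) dvd d \<Longrightarrow> d \<noteq> 0 \<Longrightarrow> \<bar>d\<bar> < r \<Longrightarrow> False"
  using dvd_imp_le_int[of d r] by auto

lemma prime_sq_dvd: "prime \<bar>n::int\<bar> \<Longrightarrow> j dvd n * n \<Longrightarrow> j dvd n \<or> n dvd j"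
proof -
  assume p: "prime \<bar>n\<bar>" and d: "j dvd n * n"
  show ?thesis
  proof (cases "n dvd j")
    case False
    hence "\<not> \<bar>n\<bar> dvd j" by simp
    hence "coprime \<bar>n\<bar> j" using p prime_imp_coprime by blast
    hence "coprime j n" by (simp add: coprime_commute)
    hence "j dvd n" using d coprime_dvd_mult_left_iff by blast
    thus ?thesis by simp
  qed simp
qed

lemma infinite_primes_above: "infinite {r::int. prime r \<and> r > B}"
proof
  assume f: "finite {r::int. prime r \<and> r > B}"
  obtain r::int where "prime r" "r > Max (insert B {r::int. prime r \<and> r > B})" using prime_big by blast
  moreover have "r \<le> Max (insert B {r::int. prime r \<and> r > B})"
    using f calculation by (intro Max_ge) auto
  ultimately show False by simp
qed

definition twin :: "'a set \<Rightarrow> ('a \<Rightarrow> 'a \<Rightarrow> bool) \<Rightarrow> 'a \<Rightarrow> 'a \<Rightarrow> bool" where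
  "twin V E u v \<longleftrightarrow> (\<forall>d\<in>V. (d = u \<or> E d u) \<longleftrightarrow> (d = v \<or> E d v))"
definition Mid :: "'a set \<Rightarrow> ('a \<Rightarrow> 'a \<Rightarrow> bool) \<Rightarrow> 'a \<Rightarrow> 'a \<Rightarrow> 'a \<Rightarrow> bool" where
  "Mid V E c a b \<longleftrightarrow> (\<forall>d\<in>V. E d c \<longrightarrow> d = a \<or> d = b \<or> E d a \<or> E d b)"
definition Btw :: "'a set \<Rightarrow> ('a \<Rightarrow> 'a \<Rightarrow> bool) \<Rightarrow> 'a \<Rightarrow> 'a \<Rightarrow> 'a \<Rightarrow> bool" where
  "Btw V E c a b \<longleftrightarrow> E c a \<and> E c b \<and> \<not> twin V E c a \<and> \<not> twin V E c b \<and> Mid V E c a b \<and>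
     finite {d\<in>V. E d a \<and> E d b \<and> d \<noteq> c \<and> \<not> E d c}"
definition Rc :: "'a set \<Rightarrow> ('a \<Rightarrow> 'a \<Rightarrow> bool) \<Rightarrow> 'a \<Rightarrow> 'a \<Rightarrow> bool" where
  "Rc V E a b \<longleftrightarrow> E a b \<and> \<not> twin V E a b \<and> \<not> (\<exists>c\<in>V. Btw V E c a b)"
definition Dprop :: "'a set \<Rightarrow> ('a \<Rightarrow> 'a \<Rightarrow> bool) \<Rightarrow> 'a \<Rightarrow> 'a \<Rightarrow> bool" where
  "Dprop V E x a \<longleftrightarrow> (\<exists>a'\<in>V. E a' x \<and> E a' a \<and> \<not> twin V E a' x \<and> Mid V E x a a' \<and>
     (\<forall>c\<in>V. E c a \<and> E c a' \<longrightarrow> c = x \<or> E c x))"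
definition Univ :: "'a set \<Rightarrow> ('a \<Rightarrow> 'a \<Rightarrow> bool) \<Rightarrow> 'a \<Rightarrow> 'a \<Rightarrow> 'a \<Rightarrow> bool" where
  "Univ V E x y u \<longleftrightarrow> E u x \<and> E u y \<and> (\<forall>z\<in>V. E z x \<and> E z y \<and> z \<noteq> u \<longrightarrow> E u z)"

lemma twin_sym: "twin V E u v \<longleftrightarrow> twin V E v u"
  unfolding twin_def by blast

lemma Mid_sym: "Mid V E c a b \<longleftrightarrow> Mid V E c b a"
  unfolding Mid_def by blast

lemma Rc_sym: assumes "\<And>x y. E x y \<longleftrightarrow> E y x" shows "Rc V E a b \<longleftrightarrow> Rc V E b a"
proof -
  have "{d\<in>V. E d a \<and> E d b \<and> d \<noteq> c \<and> \<not> E d c} = {d\<in>V. E d b \<and> E d a \<and> d \<noteq> c \<and> \<not> E d c}" for c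
    by blast
  hence "Btw V E c a b \<longleftrightarrow> Btw V E c b a" for c
    unfolding Btw_def using Mid_sym[of V E c a b] by metis
  thus ?thesis unfolding Rc_def using assms twin_sym[of V E a b] by metis
qed

locale tfgroup = group +
  assumes tf: "\<And>x n. x \<in> carrier G \<Longrightarrow> (n::int) \<noteq> 0 \<Longrightarrow> x [^] n = \<one> \<Longrightarrow> x = \<one>"
begin

abbreviation "E \<equiv> pm_power_adj G"
abbreviation "V \<equiv> carrier G"

lemma E_sym: "E x y \<longleftrightarrow> E y x"
  unfolding pm_power_adj_def by blast

lemma E_mem: "E x y \<Longrightarrow> x \<in> V \<and> y \<in> V"
  unfolding pm_power_adj_def by blast

lemma pow_inj: "x \<in> V \<Longrightarrow> x \<noteq> \<one> \<Longrightarrow> x [^] (i::int) = x [^] (j::int) \<Longrightarrow> i = j"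
proof -
  assume x: "x \<in> V" "x \<noteq> \<one>" and eq: "x [^] i = x [^] j"
  have "x [^] (i - j) = \<one>" using eq x by (simp add: int_pow_diff)
  thus "i = j" using tf[OF x(1), of "i - j"] x by auto
qed

lemma pow_ne1: "x \<in> V \<Longrightarrow> x \<noteq> \<one> \<Longrightarrow> (i::int) \<noteq> 0 \<Longrightarrow> x [^] i \<noteq> \<one>"
  using tf by blast

lemma E_ne1: "E a b \<Longrightarrow> a \<noteq> \<one> \<and> b \<noteq> \<one>"
  unfolding pm_power_adj_def by (auto dest: tf)

lemma E_cases: "E a b \<Longrightarrow> (\<exists>n. n \<noteq> 0 \<and> b = a [^] (n::int)) \<or> (\<exists>n. n \<noteq> 0 \<and> a = b [^] (n::int))"
  unfolding pm_power_adj_def by blast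

lemma E_I1: "a \<in> V \<Longrightarrow> (n::int) \<noteq> 0 \<Longrightarrow> a [^] n \<noteq> a \<Longrightarrow> E a (a [^] n)"
  unfolding pm_power_adj_def by auto

lemma E_I2: "a \<in> V \<Longrightarrow> (n::int) \<noteq> 0 \<Longrightarrow> a [^] n \<noteq> a \<Longrightarrow> E (a [^] n) a"
  using E_I1 E_sym by blast

lemma powE: fixes i j :: int assumes "x \<in> V" "x \<noteq> \<one>" "i \<noteq> 0" "j \<noteq> 0"
  shows "E (x [^] (i::int)) (x [^] (j::int)) \<longleftrightarrow> i \<noteq> j \<and> (i dvd j \<or> j dvd i)"
proof
  assume e: "E (x [^] i) (x [^] j)"
  hence "i \<noteq> j" unfolding pm_power_adj_def by auto
  moreover from E_cases[OF e] have "i dvd j \<or> j dvd i"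
  proof
    assume "\<exists>n. n \<noteq> 0 \<and> x [^] j = (x [^] i) [^] (n::int)"
    then obtain n where "x [^] j = x [^] (i * n)" using assms int_pow_pow by auto
    hence "j = i * n" using pow_inj assms by blast
    thus ?thesis by auto
  next
    assume "\<exists>n. n \<noteq> 0 \<and> x [^] i = (x [^] j) [^] (n::int)"
    then obtain n where "x [^] i = x [^] (j * n)" using assms int_pow_pow by auto
    hence "i = j * n" using pow_inj assms by blast
    thus ?thesis by auto
  qed
  ultimately show "i \<noteq> j \<and> (i dvd j \<or> j dvd i)" by blast
next
  assume h: "i \<noteq> j \<and> (i dvd j \<or> j dvd i)"
  hence ne: "x [^] i \<noteq> x [^] j" using pow_inj assms by blast
  from h show "E (x [^] i) (x [^] j)"
  proof (elim conjE disjE)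
    assume "i dvd j" then obtain k where k: "j = i * k" by blast
    with assms have "k \<noteq> 0" by auto
    moreover have "x [^] j = (x [^] i) [^] k" using k assms int_pow_pow by auto
    ultimately show ?thesis using ne assms unfolding pm_power_adj_def by auto
  next
    assume "j dvd i" then obtain k where k: "i = j * k" by blast
    with assms have "k \<noteq> 0" by auto
    moreover have "x [^] i = (x [^] j) [^] k" using k assms int_pow_pow by auto
    ultimately show ?thesis using ne assms unfolding pm_power_adj_def by auto
  qed
qed

lemma powE1: fixes i :: int assumes "x \<in> V" "x \<noteq> \<one>" "i \<noteq> 0"
  shows "E (x [^] (i::int)) x \<longleftrightarrow> i \<noteq> 1"
  using powE[OF assms, of 1] assms by simp

lemma inv_pow: "x \<in> V \<Longrightarrow> inv x = x [^] (-1::int)"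
  by (simp add: int_pow_neg)

lemma twin_inv: assumes x: "x \<in> V" "x \<noteq> \<one>" shows "twin V E x (inv x)"
proof -
  have iv: "inv x = x [^] (-1::int)" using x inv_pow by simp
  have ix: "x = inv x [^] (-1::int)" using x by (simp add: int_pow_neg)
  have xin: "x \<noteq> inv x" using pow_inj[OF x, of 1 "-1"] iv x by auto
  have key: "E d (inv x)" if "E d x" "d \<noteq> inv x" for d
  proof -
    from E_cases[OF that(1)] show ?thesis
    proof
      assume "\<exists>n. n \<noteq> 0 \<and> x = d [^] (n::int)"
      then obtain n :: int where n: "n \<noteq> 0" "x = d [^] n" by blast
      have dV: "d \<in> V" using that E_mem by blast
      have "inv x = d [^] (n * -1)" using n iv dV by (simp add: int_pow_pow)
      hence "\<exists>m::int. m \<noteq> 0 \<and> inv x = d [^] m" using n by (intro exI[of _ "n * -1"]) auto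
      thus ?thesis using that dV x unfolding pm_power_adj_def by auto
    next
      assume "\<exists>n. n \<noteq> 0 \<and> d = x [^] (n::int)"
      then obtain n :: int where n: "n \<noteq> 0" "d = x [^] n" by blast
      have e1: "(inv x [^] (-1::int)) [^] n = inv x [^] (-1 * n)" by (rule int_pow_pow) (simp add: x)
      have "d = inv x [^] (- 1 * n)" using n(2) ix e1 by metis
      hence "\<exists>m::int. m \<noteq> 0 \<and> d = inv x [^] m" using n by (intro exI[of _ "-1 * n"]) auto
      thus ?thesis using that x n unfolding pm_power_adj_def by auto
    qed
  qed
  have key2: "E d x" if "E d (inv x)" "d \<noteq> x" for d
  proof -
    from E_cases[OF that(1)] show ?thesis
    proof
      assume "\<exists>n. n \<noteq> 0 \<and> inv x = d [^] (n::int)"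
      then obtain n :: int where n: "n \<noteq> 0" "inv x = d [^] n" by blast
      have dV: "d \<in> V" using that E_mem by blast
      have "x = d [^] (n * -1)" using n ix dV by (simp add: int_pow_pow)
      hence "\<exists>m::int. m \<noteq> 0 \<and> x = d [^] m" using n by (intro exI[of _ "n * -1"]) auto
      thus ?thesis using that dV x unfolding pm_power_adj_def by auto
    next
      assume "\<exists>n. n \<noteq> 0 \<and> d = inv x [^] (n::int)"
      then obtain n :: int where n: "n \<noteq> 0" "d = inv x [^] n" by blast
      have "d = x [^] (- 1 * n)" using n iv x by (simp add: int_pow_pow)
      hence "\<exists>m::int. m \<noteq> 0 \<and> d = x [^] m" using n by (intro exI[of _ "-1 * n"]) auto
      thus ?thesis using that x n unfolding pm_power_adj_def by auto
    qed
  qed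
  have exi: "E x (inv x)" using E_I1[OF x(1), of "-1"] iv xin by auto
  show ?thesis unfolding twin_def
    using key key2 exi E_sym by blast
qed

lemma nontwin_pow: fixes n :: int assumes x: "x \<in> V" "x \<noteq> \<one>" and n: "\<bar>n\<bar> \<ge> 2"
  shows "\<not> twin V E x (x [^] (n::int))"
proof
  assume tw: "twin V E x (x [^] n)"
  obtain r::int where r: "prime r" "r > \<bar>n\<bar>" using prime_big by blast
  have r0: "r \<noteq> 0" "r \<noteq> 1" using r by auto
  have "E (x [^] r) x" using powE1[OF x r0(1)] r0 by simp
  moreover have "x [^] r \<in> V" using x by simp
  ultimately have "x [^] r = x [^] n \<or> E (x [^] r) (x [^] n)" using tw unfolding twin_def by blast
  moreover have "x [^] r \<noteq> x [^] n" using pow_inj[OF x, of r n] r by auto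
  moreover have "n \<noteq> 0" using n by auto
  moreover have "\<not> (r dvd n \<or> n dvd r)"
    using prime_dvd_cases[OF r(1), of n] dvd_small[of r n] r n calculation(3) by auto
  ultimately show False using powE[OF x r0(1), of n] n by auto
qed

end

context tfgroup begin

lemma exp_ge2: assumes c: "c \<in> V" "c \<noteq> \<one>" and t: "(t::int) \<noteq> 0" and ne: "c [^] t \<noteq> c"
  and nt: "\<not> twin V E c (c [^] t) \<or> \<not> twin V E (c [^] t) c"
  shows "\<bar>t\<bar> \<ge> 2"
proof (rule ccontr)
  assume "\<not> \<bar>t\<bar> \<ge> 2"
  hence "t = 1 \<or> t = -1" using t by auto
  moreover have "t \<noteq> 1" using ne c by auto
  ultimately have "t = -1" by simp
  hence "c [^] t = inv c" using inv_pow c by simp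
  thus False using twin_inv[OF c] nt twin_sym by metis
qed

lemma big_nonadj: fixes r m :: int
  assumes c: "c \<in> V" "c \<noteq> \<one>" and r: "prime r" "r > \<bar>m\<bar>" and m: "\<bar>m\<bar> \<ge> 2"
  shows "c [^] r \<noteq> c [^] m \<and> \<not> E (c [^] r) (c [^] m)"
proof -
  have m0: "m \<noteq> 0" using m by auto
  have r0: "r \<noteq> 0" using r by auto
  have "r \<noteq> m" using r by auto
  hence ne: "c [^] r \<noteq> c [^] m" using pow_inj[OF c] by blast
  have "\<not> (r dvd m \<or> m dvd r)"
    using prime_dvd_cases[OF r(1), of m] dvd_small[of r m] r m m0 by auto
  thus ?thesis using ne powE[OF c r0 m0] by auto
qed

lemma prime_ge2: "prime (p::int) \<Longrightarrow> \<bar>p\<bar> \<ge> 2 \<and> p \<ge> 2"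
  using prime_ge_2_int by auto

lemma Rc_prime: assumes x: "x \<in> V" "x \<noteq> \<one>" and p: "prime (p::int)"
  shows "Rc V E (x [^] p) x"
proof -
  define a where "a = x [^] p"
  have p2: "p \<ge> 2" "p \<noteq> 0" "p \<noteq> 1" using prime_ge2[OF p] by auto
  have aV: "a \<in> V" and a1: "a \<noteq> \<one>" using a_def x pow_ne1 p2 by auto
  have Eax: "E a x" using powE1[OF x p2(2)] p2 a_def by simp
  have nt: "\<not> twin V E a x" using nontwin_pow[OF x, of p] prime_ge2[OF p] twin_sym a_def by metis
  have nob: False if cV: "c \<in> V" and B: "Btw V E c a x" for c
  proof -
    from B have Eca: "E c a" and Ecx: "E c x" and nta: "\<not> twin V E c a" and ntx: "\<not> twin V E c x"
      and mid: "Mid V E c a x" and fin: "finite {d\<in>V. E d a \<and> E d x \<and> d \<noteq> c \<and> \<not> E d c}"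
      unfolding Btw_def by auto
    have c1: "c \<noteq> \<one>" using E_ne1 Eca by blast
    from E_cases[OF Eca] show False
    proof
      assume "\<exists>n. n \<noteq> 0 \<and> a = c [^] (n::int)"
      then obtain l :: int where l: "l \<noteq> 0" "a = c [^] l" by blast
      have l2: "\<bar>l\<bar> \<ge> 2" using exp_ge2[OF cV c1 l(1)] l Eca nta unfolding pm_power_adj_def by auto
      from E_cases[OF Ecx] show False
      proof
        assume "\<exists>n. n \<noteq> 0 \<and> x = c [^] (n::int)"
        then obtain k :: int where k: "k \<noteq> 0" "x = c [^] k" by blast
        have k2: "\<bar>k\<bar> \<ge> 2" using exp_ge2[OF cV c1 k(1)] k Ecx ntx unfolding pm_power_adj_def by auto
        obtain r::int where r: "prime r" "r > \<bar>k\<bar> + \<bar>l\<bar>" using prime_big by blast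
        have r0: "r \<noteq> 0" "r \<noteq> 1" using r by auto
        have "E (c [^] r) c" using powE1[OF cV c1 r0(1)] r0 by simp
        hence "c [^] r = a \<or> c [^] r = x \<or> E (c [^] r) a \<or> E (c [^] r) x"
          using mid cV unfolding Mid_def by auto
        moreover have "c [^] r \<noteq> c [^] k \<and> \<not> E (c [^] r) (c [^] k)"
          using big_nonadj[OF cV c1 r(1) _ k2] r by auto
        moreover have "c [^] r \<noteq> c [^] l \<and> \<not> E (c [^] r) (c [^] l)"
          using big_nonadj[OF cV c1 r(1) _ l2] r by auto
        ultimately show False using k l by auto
      next
        assume "\<exists>n. n \<noteq> 0 \<and> c = x [^] (n::int)"
        then obtain i :: int where i: "i \<noteq> 0" "c = x [^] i" by blast
        have "x [^] p = x [^] (i * l)" using i l a_def x by (simp add: int_pow_pow)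
        hence pil: "p = i * l" using pow_inj[OF x] by blast
        hence "\<bar>i\<bar> = 1 \<or> \<bar>i\<bar> = p" using prime_dvd_cases[OF p, of i] by auto
        moreover have "\<bar>i\<bar> \<ge> 2"
          using exp_ge2[OF x i(1)] i Ecx ntx twin_sym unfolding pm_power_adj_def by metis
        ultimately have "\<bar>i\<bar> = p" by auto
        have "\<bar>p\<bar> = \<bar>i\<bar> * \<bar>l\<bar>" using pil abs_mult by metis
        hence "p * 1 = p * \<bar>l\<bar>" using \<open>\<bar>i\<bar> = p\<close> p2 by simp
        hence "\<bar>l\<bar> = 1" using p2 by (metis mult_cancel_left)
        thus False using l2 by simp
      qed
    next
      assume "\<exists>n. n \<noteq> 0 \<and> c = a [^] (n::int)"
      then obtain j :: int where j: "j \<noteq> 0" "c = a [^] j" by blast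
      have j2: "\<bar>j\<bar> \<ge> 2"
        using exp_ge2[OF aV a1 j(1)] j Eca nta twin_sym unfolding pm_power_adj_def by metis
      define P where "P = {r::int. prime r \<and> r > \<bar>j\<bar>}"
      have sub: "(\<lambda>r. a [^] r) ` P \<subseteq> {d\<in>V. E d a \<and> E d x \<and> d \<noteq> c \<and> \<not> E d c}"
      proof
        fix d assume "d \<in> (\<lambda>r. a [^] r) ` P"
        then obtain r where r: "prime r" "r > \<bar>j\<bar>" "d = a [^] r" unfolding P_def by blast
        have r0: "r \<noteq> 0" "r \<noteq> 1" "r \<ge> 2" using r prime_ge2 by auto
        have "E d a" using powE1[OF aV a1 r0(1)] r0 r by simp
        moreover have "d = x [^] (p * r)" using r a_def x by (simp add: int_pow_pow)
        moreover have "p * r \<noteq> 1" "p * r \<noteq> 0" using r0 p2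
          by (auto simp: zmult_eq_1_iff)
        moreover have "d \<noteq> c \<and> \<not> E d c" using big_nonadj[OF aV a1 r(1) r(2) j2] r j by auto
        ultimately show "d \<in> {d\<in>V. E d a \<and> E d x \<and> d \<noteq> c \<and> \<not> E d c}"
          using powE1[OF x, of "p * r"] aV r int_pow_closed[OF x(1), of "p * r"] by auto
      qed
      have "inj_on (\<lambda>r. a [^] r) P" using pow_inj[OF aV a1] by (auto simp: inj_on_def)
      moreover have "finite ((\<lambda>r. a [^] r) ` P)" using finite_subset[OF sub fin] .
      ultimately have "finite P" using finite_image_iff by blast
      thus False using infinite_primes_above P_def by blast
    qed
  qed
  have nob': "\<not> (\<exists>c\<in>V. Btw V E c a x)" using nob by blast
  have "Rc V E a x" unfolding Rc_def using Eax nt nob' by (intro conjI)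
  thus ?thesis unfolding a_def .
qed

end

context tfgroup begin

lemma E_of_pow: "d \<in> V \<Longrightarrow> (k::int) \<noteq> 0 \<Longrightarrow> y = d [^] k \<Longrightarrow> d \<noteq> y \<Longrightarrow> E d y"
  using E_I1[of d k] by auto

lemma eq_or_E: "d \<in> V \<Longrightarrow> (k::int) \<noteq> 0 \<Longrightarrow> y = d [^] k \<Longrightarrow> d = y \<or> E d y"
  by (metis E_I1)

lemma eq_or_E': "d \<in> V \<Longrightarrow> (k::int) \<noteq> 0 \<Longrightarrow> y = d [^] k \<Longrightarrow> y = d \<or> E y d"
  by (metis E_I2)

lemma nonprime_split: fixes n :: int assumes n2: "\<bar>n\<bar> \<ge> 2" and np: "\<not> prime \<bar>n\<bar>"
  shows "\<exists>s t. n = s * t \<and> s \<ge> 2 \<and> \<bar>t\<bar> \<ge> 2"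
proof -
  have "1 < \<bar>n\<bar>" using n2 by linarith
  hence "\<not> (\<forall>m. m \<ge> 0 \<and> m dvd \<bar>n\<bar> \<longrightarrow> m = 1 \<or> m = \<bar>n\<bar>)"
    using np prime_int_iff[of "\<bar>n\<bar>"] by blast
  then obtain k where k: "k \<ge> 0" "k dvd \<bar>n\<bar>" "k \<noteq> 1" "k \<noteq> \<bar>n\<bar>" by blast
  have n0: "n \<noteq> 0" using n2 by auto
  have "k \<noteq> 0" using k(2) n0 by auto
  hence k2: "k \<ge> 2" using k(1) k(3) by linarith
  have kn: "k dvd n" using k(2) by simp
  then obtain t where t: "n = k * t" by blast
  have nt: "\<bar>n\<bar> = k * \<bar>t\<bar>" using t k(1) by (simp add: abs_mult)
  have "t \<noteq> 0" using t n0 by auto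
  moreover have "\<bar>t\<bar> \<noteq> 1" using nt k(4) by auto
  ultimately have "\<bar>t\<bar> \<ge> 2" by linarith
  thus ?thesis using t k2 by blast
qed

lemma Rc_imp_prime: fixes n :: int
  assumes x: "x \<in> V" "x \<noteq> \<one>" and n: "\<bar>n\<bar> \<ge> 2" and R: "Rc V E (x [^] n) x"
  shows "prime \<bar>n\<bar>"
proof (rule ccontr)
  assume np: "\<not> prime \<bar>n\<bar>"
  obtain s t where st: "n = s * t" "s \<ge> 2" "\<bar>t\<bar> \<ge> 2" using nonprime_split[OF n np] by blast
  define a where "a = x [^] n"
  define c where "c = x [^] s"
  have n0: "n \<noteq> 0" using n by auto
  have s0: "s \<noteq> 0" "s \<noteq> 1" using st(2) by auto
  have t0: "t \<noteq> 0" using st(3) by auto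
  have cV: "c \<in> V" and c1: "c \<noteq> \<one>" using c_def x pow_ne1 s0 by auto
  have ac: "a = c [^] t" unfolding a_def c_def st(1) by (rule sym, rule int_pow_pow, rule x(1))
  have sn: "s \<noteq> n"
  proof
    assume sn: "s = n" hence "n * 1 = n * t" using st(1) by (metis mult.right_neutral)
    hence "t = 1" using n0 by (metis mult_left_cancel)
    thus False using st(3) by simp
  qed
  have sd: "s dvd n" using st(1) by simp
  have Eca: "E c a" unfolding a_def c_def using powE[OF x s0(1) n0] sn sd by blast
  have Ecx: "E c x" unfolding c_def using powE1[OF x s0(1)] s0 by auto
  have nta: "\<not> twin V E c a" using nontwin_pow[OF cV c1 st(3)] ac by simp
  have "\<bar>s\<bar> \<ge> 2" using st by auto
  hence ntx: "\<not> twin V E c x" using nontwin_pow[OF x, of s] c_def twin_sym by metis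
  have mid: "Mid V E c a x" unfolding Mid_def
  proof (intro ballI impI)
    fix d assume dV: "d \<in> V" and Edc: "E d c"
    from E_cases[OF Edc] show "d = a \<or> d = x \<or> E d a \<or> E d x"
    proof
      assume "\<exists>k. k \<noteq> 0 \<and> c = d [^] (k::int)"
      then obtain k :: int where k: "k \<noteq> 0" "c = d [^] k" by blast
      have "a = d [^] (k * t)" using ac k dV by (simp add: int_pow_pow)
      thus ?thesis using eq_or_E[OF dV, of "k * t" a] k t0 by auto
    next
      assume "\<exists>k. k \<noteq> 0 \<and> d = c [^] (k::int)"
      then obtain k :: int where k: "k \<noteq> 0" "d = c [^] k" by blast
      have "d = x [^] (s * k)" using k c_def x by (simp add: int_pow_pow)
      thus ?thesis using eq_or_E'[OF x(1), of "s * k" d] k s0 by auto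
    qed
  qed
  have sub: "{d\<in>V. E d a \<and> E d x \<and> d \<noteq> c \<and> \<not> E d c} \<subseteq> (\<lambda>i. x [^] i) ` {i. i dvd n}"
  proof
    fix d assume "d \<in> {d\<in>V. E d a \<and> E d x \<and> d \<noteq> c \<and> \<not> E d c}"
    hence dV: "d \<in> V" and Eda: "E d a" and Edx: "E d x" and dc: "d \<noteq> c" and nE: "\<not> E d c" by auto
    from E_cases[OF Edx] show "d \<in> (\<lambda>i. x [^] i) ` {i. i dvd n}"
    proof
      assume "\<exists>k. k \<noteq> 0 \<and> x = d [^] (k::int)"
      then obtain k :: int where k: "k \<noteq> 0" "x = d [^] k" by blast
      have "c = d [^] (k * s)" using k c_def dV by (simp add: int_pow_pow)
      hence "E d c" using E_of_pow[OF dV, of "k * s" c] k s0 dc by auto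
      thus ?thesis using nE by blast
    next
      assume "\<exists>k. k \<noteq> 0 \<and> d = x [^] (k::int)"
      then obtain i :: int where i: "i \<noteq> 0" "d = x [^] i" by blast
      from E_cases[OF Eda] show ?thesis
      proof
        assume "\<exists>k. k \<noteq> 0 \<and> a = d [^] (k::int)"
        then obtain m :: int where m: "m \<noteq> 0" "a = d [^] m" by blast
        have "x [^] n = x [^] (i * m)" using m i a_def x by (simp add: int_pow_pow)
        hence "n = i * m" using pow_inj[OF x] by blast
        thus ?thesis using i by auto
      next
        assume "\<exists>k. k \<noteq> 0 \<and> d = a [^] (k::int)"
        then obtain m :: int where m: "m \<noteq> 0" "d = a [^] m" by blast
        have "d = c [^] (t * m)" using m ac cV by (simp add: int_pow_pow)
        hence "E c d" using E_of_pow[OF cV, of "t * m" d] m t0 dc by auto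
        thus ?thesis using nE E_sym by blast
      qed
    qed
  qed
  have fin: "finite {d\<in>V. E d a \<and> E d x \<and> d \<noteq> c \<and> \<not> E d c}"
    using finite_subset[OF sub] n0 by simp
  have "Btw V E c a x" unfolding Btw_def using Eca Ecx nta ntx mid fin by blast
  thus False using R cV a_def unfolding Rc_def by blast
qed

lemma Lprop: fixes n :: int assumes y: "y \<in> V" "y \<noteq> \<one>" and p: "prime \<bar>n\<bar>"
  shows "E y (y [^] n) \<and> E (y [^] (n*n)) (y [^] n) \<and> E y (y [^] (n*n)) \<and>
    \<not> twin V E y (y [^] n) \<and> \<not> twin V E (y [^] (n*n)) (y [^] n) \<and>
    Mid V E (y [^] n) y (y [^] (n*n)) \<and>
    (\<forall>c\<in>V. E c y \<and> E c (y [^] (n*n)) \<longrightarrow> c = y [^] n \<or> E c (y [^] n))"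
proof -
  define z where "z = y [^] n"
  define w where "w = y [^] (n*n)"
  have n2: "\<bar>n\<bar> \<ge> 2" using prime_ge2[OF p] by simp
  have n0: "n \<noteq> 0" "n \<noteq> 1" "n * n \<noteq> 0" "n * n \<noteq> n" "n * n \<noteq> 1" using n2
    by (auto simp: zmult_eq_1_iff)
  have zV: "z \<in> V" and z1: "z \<noteq> \<one>" using z_def y pow_ne1 n0 by auto
  have wz: "w = z [^] n" using w_def z_def y by (simp add: int_pow_pow)
  have E1: "E y z" using powE1[OF y n0(1)] n0 z_def E_sym by blast
  have E2: "E w z" using powE[OF y n0(3) n0(1)] n0 z_def w_def by auto
  have E3: "E y w" using powE1[OF y n0(3)] n0 w_def E_sym by blast
  have T1: "\<not> twin V E y z" using nontwin_pow[OF y n2] z_def by simp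
  have T2: "\<not> twin V E w z" using nontwin_pow[OF zV z1 n2] wz twin_sym by metis
  have M: "Mid V E z y w" unfolding Mid_def
  proof (intro ballI impI)
    fix d assume dV: "d \<in> V" and Edz: "E d z"
    from E_cases[OF Edz] show "d = y \<or> d = w \<or> E d y \<or> E d w"
    proof
      assume "\<exists>k. k \<noteq> 0 \<and> z = d [^] (k::int)"
      then obtain k :: int where k: "k \<noteq> 0" "z = d [^] k" by blast
      have "w = d [^] (k * n)" using wz k dV by (simp add: int_pow_pow)
      thus ?thesis using eq_or_E[OF dV, of "k * n" w] k n0 by auto
    next
      assume "\<exists>k. k \<noteq> 0 \<and> d = z [^] (k::int)"
      then obtain k :: int where k: "k \<noteq> 0" "d = z [^] k" by blast
      have "d = y [^] (n * k)" using k z_def y by (simp add: int_pow_pow)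
      thus ?thesis using eq_or_E'[OF y(1), of "n * k" d] k n0 by auto
    qed
  qed
  have CN: "\<forall>c\<in>V. E c y \<and> E c w \<longrightarrow> c = z \<or> E c z"
  proof (intro ballI impI)
    fix c assume cV: "c \<in> V" and h: "E c y \<and> E c w"
    from h have Ecy: "E c y" by blast
    from E_cases[OF Ecy] show "c = z \<or> E c z"
    proof
      assume "\<exists>k. k \<noteq> 0 \<and> y = c [^] (k::int)"
      then obtain k :: int where k: "k \<noteq> 0" "y = c [^] k" by blast
      have "z = c [^] (k * n)" using z_def k cV by (simp add: int_pow_pow)
      thus ?thesis using eq_or_E[OF cV, of "k * n" z] k n0 by auto
    next
      assume "\<exists>k. k \<noteq> 0 \<and> c = y [^] (k::int)"
      then obtain j :: int where j: "j \<noteq> 0" "c = y [^] j" by blast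
      have "j dvd n * n \<or> n * n dvd j" using h j powE[OF y j(1) n0(3)] w_def by auto
      thus ?thesis
      proof
        assume "n * n dvd j"
        then obtain m where m: "j = n * n * m" by blast
        hence "c = z [^] (n * m)" using j z_def y by (simp add: int_pow_pow mult.assoc)
        thus ?thesis using eq_or_E'[OF zV, of "n * m" c] m j by auto
      next
        assume "j dvd n * n"
        hence "j dvd n \<or> n dvd j" using prime_sq_dvd[OF p] by blast
        thus ?thesis using powE[OF y j(1) n0(1)] j z_def by auto
      qed
    qed
  qed
  show ?thesis using E1 E2 E3 T1 T2 M CN z_def w_def by blast
qed

lemma Dprop_of_div:
  assumes div: "\<And>x n. x \<in> V \<Longrightarrow> (n::int) \<noteq> 0 \<Longrightarrow> \<exists>y\<in>V. y [^] n = x"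
    and R: "Rc V E a x"
  shows "Dprop V E x a"
proof -
  have Eax: "E a x" and nt: "\<not> twin V E a x" using R unfolding Rc_def by auto
  have aV: "a \<in> V" and xV: "x \<in> V" using E_mem[OF Eax] by auto
  have a1: "a \<noteq> \<one>" and x1: "x \<noteq> \<one>" using E_ne1[OF Eax] by auto
  from E_cases[OF Eax] show ?thesis
  proof
    assume "\<exists>k. k \<noteq> 0 \<and> x = a [^] (k::int)"
    then obtain n :: int where n: "n \<noteq> 0" "x = a [^] n" by blast
    have n2: "\<bar>n\<bar> \<ge> 2" using exp_ge2[OF aV a1 n(1)] n Eax nt unfolding pm_power_adj_def by metis
    have "Rc V E x a" using R Rc_sym[of E] E_sym by blast
    hence p: "prime \<bar>n\<bar>" using Rc_imp_prime[OF aV a1 n2] n by simp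
    define a' where "a' = a [^] (n * n)"
    have L: "E a x \<and> E a' x \<and> E a a' \<and> \<not> twin V E a x \<and> \<not> twin V E a' x \<and> Mid V E x a a' \<and>
      (\<forall>c\<in>V. E c a \<and> E c a' \<longrightarrow> c = x \<or> E c x)"
      using Lprop[OF aV a1 p] n a'_def by simp
    have a'V: "a' \<in> V" using a'_def aV by simp
    have "E a' a" using L E_sym by blast
    thus ?thesis unfolding Dprop_def using L a'V by blast
  next
    assume "\<exists>k. k \<noteq> 0 \<and> a = x [^] (k::int)"
    then obtain n :: int where n: "n \<noteq> 0" "a = x [^] n" by blast
    have n2: "\<bar>n\<bar> \<ge> 2" using exp_ge2[OF xV x1 n(1)] n Eax nt twin_sym unfolding pm_power_adj_def by metis
    hence p: "prime \<bar>n\<bar>" using Rc_imp_prime[OF xV x1 n2] n R by simp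
    obtain y where yV: "y \<in> V" and yx: "y [^] n = x" using div[OF xV n(1)] by blast
    have y1: "y \<noteq> \<one>" using yx x1 yV by auto
    have "a = (y [^] n) [^] n" using n yx by simp
    hence ay: "a = y [^] (n * n)" by (simp add: int_pow_pow yV)
    have L: "E y x \<and> E a x \<and> E y a \<and> \<not> twin V E y x \<and> \<not> twin V E a x \<and> Mid V E x y a \<and>
      (\<forall>c\<in>V. E c y \<and> E c a \<longrightarrow> c = x \<or> E c x)"
      using Lprop[OF yV y1 p] yx ay by simp
    have "Mid V E x a y" using L Mid_sym[of V E x y a] by blast
    thus ?thesis unfolding Dprop_def using L yV by blast
  qed
qed

lemma root_of_Dprop: fixes p :: int
  assumes x: "x \<in> V" "x \<noteq> \<one>" and p: "prime p" and D: "Dprop V E x (x [^] p)"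
  shows "\<exists>y\<in>V. y [^] p = x"
proof -
  define a where "a = x [^] p"
  have p2: "p \<ge> 2" "p \<noteq> 0" "p \<noteq> 1" using prime_ge2[OF p] by auto
  obtain a' where a'V: "a' \<in> V" and E1: "E a' x" and E2: "E a' a" and nt: "\<not> twin V E a' x"
    and mid: "Mid V E x a a'" and cn: "\<forall>c\<in>V. E c a \<and> E c a' \<longrightarrow> c = x \<or> E c x"
    using D a_def unfolding Dprop_def by blast
  have a'1: "a' \<noteq> \<one>" using E_ne1 E1 by blast
  from E_cases[OF E1] show ?thesis
  proof
    assume "\<exists>k. k \<noteq> 0 \<and> x = a' [^] (k::int)"
    then obtain k :: int where k: "k \<noteq> 0" "x = a' [^] k" by blast
    have k2: "\<bar>k\<bar> \<ge> 2" using exp_ge2[OF a'V a'1 k(1)] k E1 nt unfolding pm_power_adj_def by metis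
    define c where "c = a' [^] p"
    have cV: "c \<in> V" using c_def a'V by simp
    have Eca': "E c a'" using powE1[OF a'V a'1 p2(2)] p2 c_def by simp
    have aa: "a = a' [^] (k * p)" using a_def k a'V by (simp add: int_pow_pow)
    have "k * p \<noteq> p" using k2 p2 by auto
    hence Eca: "E c a" using powE[OF a'V a'1 p2(2), of "k * p"] aa c_def k p2 by auto
    hence "c = x \<or> E c x" using cn cV Eca' by blast
    thus ?thesis
    proof
      assume "c = x" thus ?thesis using c_def a'V by blast
    next
      assume "E c x"
      hence "p dvd k \<or> k dvd p" using powE[OF a'V a'1 p2(2) k(1)] c_def k by auto
      thus ?thesis
      proof
        assume "p dvd k"
        then obtain m where m: "k = p * m" by blast
        have "x = (a' [^] m) [^] p" using k m a'V by (simp add: int_pow_pow mult.commute)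
        thus ?thesis using a'V by blast
      next
        assume "k dvd p"
        hence "\<bar>k\<bar> = p" using prime_dvd_cases[OF p, of k] k2 by auto
        hence "k = p \<or> k = - p" by auto
        thus ?thesis
        proof
          assume "k = p" thus ?thesis using k a'V by blast
        next
          assume "k = - p"
          hence "x = (inv a') [^] p" using k a'V by (simp add: int_pow_neg int_pow_inv)
          thus ?thesis using a'V by blast
        qed
      qed
    qed
  next
    assume "\<exists>k. k \<noteq> 0 \<and> a' = x [^] (k::int)"
    then obtain j :: int where j: "j \<noteq> 0" "a' = x [^] j" by blast
    have j2: "\<bar>j\<bar> \<ge> 2" using exp_ge2[OF x j(1)] j E1 nt twin_sym unfolding pm_power_adj_def by metis
    obtain r::int where r: "prime r" "r > \<bar>j\<bar> + p" using prime_big by blast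
    have r0: "r \<noteq> 0" "r \<noteq> 1" using r by auto
    have "E (x [^] r) x" using powE1[OF x r0(1)] r0 by simp
    hence "x [^] r = a \<or> x [^] r = a' \<or> E (x [^] r) a \<or> E (x [^] r) a'"
      using mid x unfolding Mid_def by auto
    moreover have "x [^] r \<noteq> x [^] j \<and> \<not> E (x [^] r) (x [^] j)"
      using big_nonadj[OF x r(1) _ j2] r p2 by auto
    moreover have "x [^] r \<noteq> x [^] p \<and> \<not> E (x [^] r) (x [^] p)"
      using big_nonadj[OF x r(1), of p] r p2 by auto
    ultimately show ?thesis using j a_def by auto
  qed
qed

end

context tfgroup begin

lemma univ_gen: fixes i j e :: int
  assumes z: "z \<in> V" "z \<noteq> \<one>" and ij: "i \<noteq> 0" "j \<noteq> 0" "\<not> i dvd j" "\<not> j dvd i"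
    and e: "e \<noteq> 0" "e \<noteq> i" "e \<noteq> j" "e dvd i \<or> i dvd e" "e dvd j \<or> j dvd e"
    and cm: "\<And>m. i dvd m \<Longrightarrow> j dvd m \<Longrightarrow> e dvd m"
    and comb: "e = s * i + t * j"
  shows "Univ V E (z [^] i) (z [^] j) (z [^] e)"
proof -
  define x where "x = z [^] i"
  define y where "y = z [^] j"
  define u where "u = z [^] e"
  have uV: "u \<in> V" using u_def z by simp
  have Eux: "E u x" using powE[OF z e(1) ij(1)] e unfolding u_def x_def by blast
  have Euy: "E u y" using powE[OF z e(1) ij(2)] e unfolding u_def y_def by blast
  have univ: "E u c" if cV: "c \<in> V" and Ecx: "E c x" and Ecy: "E c y" and cu: "c \<noteq> u" for c
  proof -
    from E_cases[OF Ecx] show ?thesis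
    proof
      assume "\<exists>k. k \<noteq> 0 \<and> x = c [^] (k::int)"
      then obtain k :: int where k: "k \<noteq> 0" "x = c [^] k" by blast
      from E_cases[OF Ecy] show ?thesis
      proof
        assume "\<exists>k. k \<noteq> 0 \<and> y = c [^] (k::int)"
        then obtain k' :: int where k': "k' \<noteq> 0" "y = c [^] k'" by blast
        have "u = (z [^] i) [^] s \<otimes> (z [^] j) [^] t"
          using z comb by (simp add: u_def int_pow_pow int_pow_mult mult.commute)
        also have "\<dots> = c [^] (k * s + k' * t)"
          using k k' cV x_def y_def by (simp add: int_pow_pow int_pow_mult)
        finally have uc: "u = c [^] (k * s + k' * t)" .
        have "u \<noteq> \<one>" using pow_ne1[OF z e(1)] u_def by simp
        hence "k * s + k' * t \<noteq> 0" using uc by auto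
        hence "E c u" using E_of_pow[OF cV _ uc] cu by auto
        thus ?thesis using E_sym by blast
      next
        assume "\<exists>k. k \<noteq> 0 \<and> c = y [^] (k::int)"
        then obtain k' :: int where k': "k' \<noteq> 0" "c = y [^] k'" by blast
        have "z [^] i = z [^] (j * (k' * k))" using k k' x_def y_def z by (simp add: int_pow_pow mult.assoc)
        hence "i = j * (k' * k)" using pow_inj[OF z] by blast
        thus ?thesis using ij by auto
      qed
    next
      assume "\<exists>k. k \<noteq> 0 \<and> c = x [^] (k::int)"
      then obtain k :: int where k: "k \<noteq> 0" "c = x [^] k" by blast
      have cz: "c = z [^] (i * k)" using k x_def z by (simp add: int_pow_pow)
      from E_cases[OF Ecy] show ?thesis
      proof
        assume "\<exists>k. k \<noteq> 0 \<and> y = c [^] (k::int)"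
        then obtain k' :: int where k': "k' \<noteq> 0" "y = c [^] k'" by blast
        have "z [^] j = z [^] (i * (k * k'))" using k' cz y_def z by (simp add: int_pow_pow mult.assoc)
        hence "j = i * (k * k')" using pow_inj[OF z] by blast
        thus ?thesis using ij by auto
      next
        assume "\<exists>k. k \<noteq> 0 \<and> c = y [^] (k::int)"
        then obtain k' :: int where k': "k' \<noteq> 0" "c = y [^] k'" by blast
        have "z [^] (i * k) = z [^] (j * k')" using k' cz y_def z by (simp add: int_pow_pow)
        hence "i * k = j * k'" using pow_inj[OF z] by blast
        hence "e dvd i * k" using cm[of "i * k"] by (metis dvd_triv_left dvd_triv_left mult.commute dvd_mult)
        moreover have "e \<noteq> i * k" using cu cz u_def by auto
        moreover have "i * k \<noteq> 0" using ij k by simp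
        ultimately show ?thesis using powE[OF z e(1), of "i * k"] cz u_def by auto
      qed
    qed
  qed
  show ?thesis unfolding Univ_def using Eux Euy univ
    unfolding x_def[symmetric] y_def[symmetric] u_def[symmetric] by blast
qed

lemma three_univ: fixes i j :: int
  assumes z: "z \<in> V" "z \<noteq> \<one>" and ij: "i \<noteq> 0" "j \<noteq> 0" "\<not> i dvd j" "\<not> j dvd i"
  shows "\<exists>u1\<in>V. \<exists>u2\<in>V. \<exists>u3\<in>V. u1 \<noteq> u2 \<and> u1 \<noteq> u3 \<and> u2 \<noteq> u3 \<and>
     Univ V E (z [^] i) (z [^] j) u1 \<and> Univ V E (z [^] i) (z [^] j) u2 \<and> Univ V E (z [^] i) (z [^] j) u3"
proof -
  define g where "g = gcd i j"
  define l where "l = lcm i j"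
  have g0: "g > 0" using ij g_def by (simp add: le_less)
  have "l \<noteq> 0" using ij l_def by (simp add: lcm_eq_0_iff)
  hence l0: "l > 0" using lcm_ge_0_int[of i j] l_def by linarith
  have gi: "g dvd i" "g dvd j" using g_def by auto
  have li: "i dvd l" "j dvd l" using l_def by auto
  have gne: "g \<noteq> i" "g \<noteq> j" using gi ij by auto
  have gne': "-g \<noteq> i" "-g \<noteq> j" using gi ij by auto
  have lne: "l \<noteq> i" "l \<noteq> j" using li ij by auto
  have gl: "g \<noteq> l" using gi li ij by (metis dvd_trans)
  obtain s t where st: "s * i + t * j = g" using bezout_int g_def by blast
  have cmg: "g dvd m" if "i dvd m" "j dvd m" for m using that gi dvd_trans by blast
  have cml: "l dvd m" if "i dvd m" "j dvd m" for m using that l_def by (simp add: lcm_least)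
  obtain q where q: "l = i * q" using li by blast
  have U1: "Univ V E (z [^] i) (z [^] j) (z [^] g)"
    by (rule univ_gen[OF z ij, of g s t]) (use g0 gne gi cmg st in auto)
  have U2: "Univ V E (z [^] i) (z [^] j) (z [^] (-g))"
    by (rule univ_gen[OF z ij, of "-g" "-s" "-t"]) (use g0 gne' gi cmg st in auto)
  have U3: "Univ V E (z [^] i) (z [^] j) (z [^] l)"
    by (rule univ_gen[OF z ij, of l q 0]) (use l0 lne li cml q in auto)
  have d1: "z [^] g \<noteq> z [^] (-g)" using pow_inj[OF z, of g "-g"] g0 by auto
  have d2: "z [^] g \<noteq> z [^] l" using pow_inj[OF z, of g l] gl by auto
  have d3: "z [^] (-g) \<noteq> z [^] l" using pow_inj[OF z, of "-g" l] g0 l0 by auto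
  show ?thesis
    apply (rule bexI[of _ "z [^] g"]) apply (rule bexI[of _ "z [^] (-g)"]) apply (rule bexI[of _ "z [^] l"])
    using U1 U2 U3 d1 d2 d3 apply blast
    using z by (auto intro: int_pow_closed)
qed

lemma lc_core: fixes ka kb la :: int
  assumes x: "x \<in> V" "x \<noteq> \<one>" and y: "y \<in> V" and xy: "x \<noteq> y" "\<not> E x y"
    and Ua: "Univ V E x y ua" and Ub: "Univ V E x y ub"
    and ua: "ua = x [^] ka" "ua = y [^] la" "ka \<noteq> 0" "la \<noteq> 0"
    and ub: "ub = x [^] kb" "kb \<noteq> 0" and lt: "\<bar>ka\<bar> < \<bar>kb\<bar>"
  shows False
proof -
  have uab: "ua \<noteq> ub" using ua ub lt pow_inj[OF x, of ka kb] by auto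
  have uaV: "ua \<in> V" using ua x by simp
  have "E ub ua" using Ua Ub uab uaV unfolding Univ_def by auto
  hence "ka dvd kb \<or> kb dvd ka" using powE[OF x ub(2) ua(3)] ua ub by auto
  moreover have "\<not> kb dvd ka" using dvd_imp_le_int[OF ua(3), of kb] lt by linarith
  ultimately obtain t where t: "kb = ka * t" by blast
  have t0: "t \<noteq> 0" using t ub by auto
  have "\<bar>kb\<bar> = \<bar>ka\<bar> * \<bar>t\<bar>" using t by (simp add: abs_mult)
  hence t2: "\<bar>t\<bar> \<ge> 2" using lt t0 by (cases "\<bar>t\<bar> = 1") auto
  obtain s :: int where s: "prime s" "s > \<bar>t\<bar>" using prime_big by blast
  have s2: "s \<ge> 2" "s \<noteq> 0" using prime_ge2[OF s(1)] by auto
  define d where "d = x [^] (ka * s)"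
  have dV: "d \<in> V" using d_def x by simp
  have ks: "ka * s \<noteq> 0" "ka * s \<noteq> 1" using ua(3) s2 by (auto simp: zmult_eq_1_iff)
  have Edx: "E d x" using powE1[OF x ks(1)] ks d_def by simp
  have dy: "d = y [^] (la * s)" using d_def ua y x by (metis int_pow_pow)
  have "d \<noteq> y"
  proof
    assume "d = y"
    hence "y = x [^] (ka * s)" using d_def by simp
    hence "E x y" using E_of_pow[OF x(1) ks(1)] xy by blast
    thus False using xy by blast
  qed
  moreover have "la * s \<noteq> 0" using ua(4) s2 by simp
  ultimately have "E y d" using E_of_pow[OF y _ dy] by metis
  hence Edy: "E d y" using E_sym by blast
  have "ka * s \<noteq> kb" using t s t0 ua(3) by auto
  hence dub: "d \<noteq> ub" using pow_inj[OF x] d_def ub by blast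
  have "E ub d" using Ub dV Edx Edy dub unfolding Univ_def by blast
  hence "kb dvd ka * s \<or> ka * s dvd kb" using powE[OF x ub(2) ks(1)] ub d_def by auto
  thus False
  proof
    assume "kb dvd ka * s"
    hence "t dvd s" using t ua(3) by simp
    hence "\<bar>t\<bar> = 1 \<or> \<bar>t\<bar> = s" using prime_dvd_cases[OF s(1)] by blast
    thus False using t2 s by auto
  next
    assume "ka * s dvd kb"
    hence "s dvd t" using t ua(3) by simp
    thus False using dvd_small[of s t] s t0 by auto
  qed
qed

lemma three_abs: fixes k1 k2 k3 :: int
  assumes "k1 \<noteq> k2" "k1 \<noteq> k3" "k2 \<noteq> k3"
  shows "\<bar>k1\<bar> < \<bar>k2\<bar> \<or> \<bar>k2\<bar> < \<bar>k1\<bar> \<or> \<bar>k1\<bar> < \<bar>k3\<bar> \<or> \<bar>k3\<bar> < \<bar>k1\<bar> \<or> \<bar>k2\<bar> < \<bar>k3\<bar> \<or> \<bar>k3\<bar> < \<bar>k2\<bar>"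
  using assms by arith

lemma loc_cyc_univ:
  assumes x: "x \<in> V" "x \<noteq> \<one>" and y: "y \<in> V" "y \<noteq> \<one>" and xy: "x \<noteq> y" "\<not> E x y"
    and nc: "\<not> (\<exists>z\<in>V. \<exists>a::int. \<exists>b::int. x = z [^] a \<and> y = z [^] b)"
    and u: "u1 \<noteq> u2" "u1 \<noteq> u3" "u2 \<noteq> u3"
    and U: "Univ V E x y u1" "Univ V E x y u2" "Univ V E x y u3"
  shows False
proof -
  have rep: "\<exists>k::int. \<exists>l::int. k \<noteq> 0 \<and> l \<noteq> 0 \<and> u = x [^] k \<and> u = y [^] l" if Uu: "Univ V E x y u" for u
  proof -
    have Eux: "E u x" and Euy: "E u y" using Uu unfolding Univ_def by auto
    have uV: "u \<in> V" using E_mem[OF Eux] by blast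
    from E_cases[OF Eux] show ?thesis
    proof
      assume "\<exists>k. k \<noteq> 0 \<and> x = u [^] (k::int)"
      then obtain k :: int where k: "k \<noteq> 0" "x = u [^] k" by blast
      from E_cases[OF Euy] show ?thesis
      proof
        assume "\<exists>k. k \<noteq> 0 \<and> y = u [^] (k::int)"
        then obtain l :: int where l: "y = u [^] l" by blast
        have "x = u [^] k \<and> y = u [^] l" using k(2) l by simp
        hence "\<exists>z\<in>V. \<exists>a::int. \<exists>b::int. x = z [^] a \<and> y = z [^] b" using uV by blast
        thus ?thesis using nc by blast
      next
        assume "\<exists>k. k \<noteq> 0 \<and> u = y [^] (k::int)"
        then obtain l :: int where l: "l \<noteq> 0" "u = y [^] l" by blast
        have "x = y [^] (l * k)" using k l y by (simp add: int_pow_pow)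
        hence "E y x" using E_of_pow[OF y(1), of "l * k" x] k l xy by auto
        thus ?thesis using xy E_sym by blast
      qed
    next
      assume "\<exists>k. k \<noteq> 0 \<and> u = x [^] (k::int)"
      then obtain k :: int where k: "k \<noteq> 0" "u = x [^] k" by blast
      from E_cases[OF Euy] show ?thesis
      proof
        assume "\<exists>k. k \<noteq> 0 \<and> y = u [^] (k::int)"
        then obtain l :: int where l: "l \<noteq> 0" "y = u [^] l" by blast
        have "y = x [^] (k * l)" using k l x by (simp add: int_pow_pow)
        hence "E x y" using E_of_pow[OF x(1), of "k * l" y] k l xy by auto
        thus ?thesis using xy by blast
      next
        assume "\<exists>k. k \<noteq> 0 \<and> u = y [^] (k::int)"
        then obtain l :: int where l: "l \<noteq> 0" "u = y [^] l" by blast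
        thus ?thesis using k by blast
      qed
    qed
  qed
  obtain k1 l1 :: int where r1: "k1 \<noteq> 0" "l1 \<noteq> 0" "u1 = x [^] k1" "u1 = y [^] l1" using rep[OF U(1)] by blast
  obtain k2 l2 :: int where r2: "k2 \<noteq> 0" "l2 \<noteq> 0" "u2 = x [^] k2" "u2 = y [^] l2" using rep[OF U(2)] by blast
  obtain k3 l3 :: int where r3: "k3 \<noteq> 0" "l3 \<noteq> 0" "u3 = x [^] k3" "u3 = y [^] l3" using rep[OF U(3)] by blast
  have "k1 \<noteq> k2" "k1 \<noteq> k3" "k2 \<noteq> k3" using u r1 r2 r3 by auto
  from three_abs[OF this] show False
  proof (elim disjE)
    assume "\<bar>k1\<bar> < \<bar>k2\<bar>" thus False by (rule lc_core[OF x y(1) xy U(1) U(2) r1(3) r1(4) r1(1) r1(2) r2(3) r2(1)])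
  next
    assume "\<bar>k2\<bar> < \<bar>k1\<bar>" thus False by (rule lc_core[OF x y(1) xy U(2) U(1) r2(3) r2(4) r2(1) r2(2) r1(3) r1(1)])
  next
    assume "\<bar>k1\<bar> < \<bar>k3\<bar>" thus False by (rule lc_core[OF x y(1) xy U(1) U(3) r1(3) r1(4) r1(1) r1(2) r3(3) r3(1)])
  next
    assume "\<bar>k3\<bar> < \<bar>k1\<bar>" thus False by (rule lc_core[OF x y(1) xy U(3) U(1) r3(3) r3(4) r3(1) r3(2) r1(3) r1(1)])
  next
    assume "\<bar>k2\<bar> < \<bar>k3\<bar>" thus False by (rule lc_core[OF x y(1) xy U(2) U(3) r2(3) r2(4) r2(1) r2(2) r3(3) r3(1)])
  next
    assume "\<bar>k3\<bar> < \<bar>k2\<bar>" thus False by (rule lc_core[OF x y(1) xy U(3) U(2) r3(3) r3(4) r3(1) r3(2) r2(3) r2(1)])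
  qed
qed

end

locale giso =
  fixes V :: "'a set" and E :: "'a \<Rightarrow> 'a \<Rightarrow> bool" and W :: "'b set" and F :: "'b \<Rightarrow> 'b \<Rightarrow> bool"
    and f :: "'a \<Rightarrow> 'b"
  assumes bij: "bij_betw f V W"
    and pres: "\<And>x y. x \<in> V \<Longrightarrow> y \<in> V \<Longrightarrow> E x y \<longleftrightarrow> F (f x) (f y)"
    and Em: "\<And>x y. E x y \<Longrightarrow> x \<in> V \<and> y \<in> V"
    and Fm: "\<And>x y. F x y \<Longrightarrow> x \<in> W \<and> y \<in> W"
begin

lemma W_eq: "W = f ` V" using bij by (simp add: bij_betw_def)
lemma inj: "inj_on f V" using bij by (simp add: bij_betw_def)
lemma fV: "x \<in> V \<Longrightarrow> f x \<in> W" using W_eq by blast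
lemma feq: "x \<in> V \<Longrightarrow> y \<in> V \<Longrightarrow> f x = f y \<longleftrightarrow> x = y" using inj by (auto simp: inj_on_def)

lemma ballW: "(\<forall>d\<in>W. P d) \<longleftrightarrow> (\<forall>d\<in>V. P (f d))" using W_eq by blast
lemma bexW: "(\<exists>d\<in>W. P d) \<longleftrightarrow> (\<exists>d\<in>V. P (f d))" using W_eq by blast

lemma twin_t: "u \<in> V \<Longrightarrow> v \<in> V \<Longrightarrow> twin W F (f u) (f v) \<longleftrightarrow> twin V E u v"
  unfolding twin_def ballW using pres feq by (smt (verit))

lemma Mid_t: "c \<in> V \<Longrightarrow> a \<in> V \<Longrightarrow> b \<in> V \<Longrightarrow> Mid W F (f c) (f a) (f b) \<longleftrightarrow> Mid V E c a b"
  unfolding Mid_def ballW using pres feq by (smt (verit))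

lemma Btw_t: assumes "c \<in> V" "a \<in> V" "b \<in> V"
  shows "Btw W F (f c) (f a) (f b) \<longleftrightarrow> Btw V E c a b"
proof -
  have eq: "{d\<in>W. F d (f a) \<and> F d (f b) \<and> d \<noteq> f c \<and> \<not> F d (f c)} =
    f ` {d\<in>V. E d a \<and> E d b \<and> d \<noteq> c \<and> \<not> E d c}"
    using assms pres feq W_eq by auto
  have "finite {d\<in>W. F d (f a) \<and> F d (f b) \<and> d \<noteq> f c \<and> \<not> F d (f c)} \<longleftrightarrow>
      finite {d\<in>V. E d a \<and> E d b \<and> d \<noteq> c \<and> \<not> E d c}"
    unfolding eq by (rule finite_image_iff) (rule inj_on_subset[OF inj], blast)
  thus ?thesis unfolding Btw_def using assms pres twin_t Mid_t by simp
qed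

lemma Rc_t: "a \<in> V \<Longrightarrow> b \<in> V \<Longrightarrow> Rc W F (f a) (f b) \<longleftrightarrow> Rc V E a b"
  unfolding Rc_def bexW using pres twin_t Btw_t by simp

lemma Dprop_t: "x \<in> V \<Longrightarrow> a \<in> V \<Longrightarrow> Dprop W F (f x) (f a) \<longleftrightarrow> Dprop V E x a"
  unfolding Dprop_def bexW ballW using pres twin_t Mid_t feq by (smt (verit))

lemma Univ_t: "x \<in> V \<Longrightarrow> y \<in> V \<Longrightarrow> u \<in> V \<Longrightarrow> Univ W F (f x) (f y) (f u) \<longleftrightarrow> Univ V E x y u"
  unfolding Univ_def ballW using pres feq by (smt (verit))

end

abbreviation "QQ \<equiv> rat_add_group"

lemma Q_tf: "tfgroup QQ"
proof -
  interpret group QQ by (rule group_Qg)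
  show ?thesis by unfold_locales (auto simp: Qg_pow)
qed

lemma Q_adj0: "\<not> pm_power_adj QQ 0 y"
  unfolding pm_power_adj_def by (auto simp: Qg_pow)

lemma Q_div: "(n::int) \<noteq> 0 \<Longrightarrow> \<exists>y\<in>carrier QQ. y [^]\<^bsub>QQ\<^esub> n = x"
  by (rule bexI[of _ "x / of_int n"]) (auto simp: Qg_pow)

lemma Q_lc: "\<exists>z::rat. z \<noteq> 0 \<and> (\<exists>i::int. \<exists>j::int. x = z [^]\<^bsub>QQ\<^esub> i \<and> y = z [^]\<^bsub>QQ\<^esub> j)"
proof -
  obtain a b where ab: "quotient_of x = (a, b)" by (cases "quotient_of x")
  obtain c d where cd: "quotient_of y = (c, d)" by (cases "quotient_of y")
  have b0: "b > 0" and d0: "d > 0" using ab cd quotient_of_denom_pos by blast+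
  have x: "x = of_int a / of_int b" and y: "y = of_int c / of_int d"
    using ab cd quotient_of_div by blast+
  define z where "z = 1 / (of_int b * of_int d :: rat)"
  have "z \<noteq> 0" using b0 d0 z_def by simp
  moreover have "x = of_int (a * d) * z" unfolding x z_def using b0 d0 by (simp add: field_simps)
  moreover have "y = of_int (c * b) * z" unfolding y z_def using b0 d0 by (simp add: field_simps)
  ultimately show ?thesis
    by (intro exI[of _ z] conjI exI[of _ "a * d"] exI[of _ "c * b"]) (auto simp: Qg_pow)
qed

context tfgroup begin

lemma div_all: assumes pr: "\<And>x p. x \<in> V \<Longrightarrow> prime (p::int) \<Longrightarrow> \<exists>y\<in>V. y [^] p = x"
  shows "x \<in> V \<Longrightarrow> n \<ge> 1 \<Longrightarrow> \<exists>y\<in>V. y [^] (int n) = x"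
proof (induction n arbitrary: x rule: less_induct)
  case (less n)
  show ?case
  proof (cases "n = 1")
    case True thus ?thesis using less.prems by (intro bexI[of _ x]) auto
  next
    case False
    then obtain p :: nat where p: "prime p" "p dvd n" using prime_factor_nat by blast
    then obtain m where m: "n = p * m" by blast
    have "m \<ge> 1" using m less.prems by (cases m) auto
    moreover have "m < n" using m p less.prems prime_gt_1_nat[OF p(1)] calculation by auto
    moreover obtain y where y: "y \<in> V" "y [^] (int p) = x" using pr[OF less.prems(1), of "int p"] p by auto
    ultimately obtain z where z: "z \<in> V" "z [^] (int m) = y" using less.IH[of m y] by blast
    have e: "(z [^] int m) [^] int p = z [^] (int m * int p)" by (rule int_pow_pow[OF z(1)])
    have "int n = int m * int p" using m by simp
    hence "z [^] (int n) = (z [^] (int m)) [^] (int p)" using e by simp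
    thus ?thesis using z y by auto
  qed
qed

lemma iso_Q:
  assumes LC: "\<And>x y. x \<in> V \<Longrightarrow> y \<in> V \<Longrightarrow> \<exists>z\<in>V. \<exists>a::int. \<exists>b::int. x = z [^] a \<and> y = z [^] b"
    and DV: "\<And>x n. x \<in> V \<Longrightarrow> (n::int) > 0 \<Longrightarrow> \<exists>y\<in>V. y [^] n = x"
    and g: "g \<in> V" "g \<noteq> \<one>"
  shows "\<exists>h. h \<in> iso QQ G"
proof -
  have uniq: "y = z" if yz: "y \<in> V" "z \<in> V" "(n::int) \<noteq> 0" "y [^] n = z [^] n" for y z n
  proof -
    obtain h a b where h: "h \<in> V" "y = h [^] (a::int)" "z = h [^] (b::int)" using LC[OF yz(1,2)] by blast
    show ?thesis
    proof (cases "h = \<one>")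
      case True thus ?thesis using h by simp
    next
      case False
      have "h [^] (a * n) = h [^] (b * n)" using h yz(4) by (simp add: int_pow_pow)
      hence "a * n = b * n" using pow_inj[OF h(1) False] by blast
      thus ?thesis using yz(3) h by simp
    qed
  qed
  define rt where "rt n = (THE y. y \<in> V \<and> y [^] (n::int) = g)" for n
  have rt: "rt n \<in> V \<and> rt n [^] n = g" if "n > 0" for n
  proof -
    have "\<exists>!y. y \<in> V \<and> y [^] n = g" using DV[OF g(1) that] uniq that by (metis less_irrefl)
    thus ?thesis unfolding rt_def by (rule theI')
  qed
  have rt_eq: "rt n = y" if "n > 0" "y \<in> V" "y [^] n = g" for n y
    using uniq[of "rt n" y n] rt[OF that(1)] that by auto
  have rt1: "rt n \<noteq> \<one>" if "n > 0" for n using rt[OF that] g by auto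
  have rt_mul: "rt (b * k) [^] k = rt b" if "b > 0" "k > 0" for b k
  proof -
    have bk: "b * k > 0" using that by simp
    have "(rt (b * k) [^] k) [^] b = g" using rt[OF bk] by (simp add: int_pow_pow mult.commute)
    thus ?thesis using rt_eq[OF that(1), of "rt (b * k) [^] k"] rt[OF bk] by simp
  qed
  define psi where "psi q = rt (snd (quotient_of q)) [^] (fst (quotient_of q))" for q
  have psiV: "psi q \<in> V" for q using rt quotient_of_denom_pos' psi_def by simp
  have rep: "psi (of_int a / of_int b) = rt b [^] a" if "b > 0" for a b
  proof -
    obtain c d where cd: "quotient_of (of_int a / of_int b) = (c, d)" by (cases "quotient_of (of_int a / of_int b)")
    have d0: "d > 0" using cd quotient_of_denom_pos by blast
    have "of_int a / of_int b = (of_int c / of_int d :: rat)" using cd quotient_of_div by blast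
    hence "of_int a * of_int d = (of_int c * of_int b :: rat)" using that d0 by (simp add: field_simps)
    hence ad: "a * d = c * b" by (metis of_int_eq_iff of_int_mult)
    have "psi (of_int a / of_int b) = rt d [^] c" using cd psi_def by simp
    also have "\<dots> = (rt (d * b) [^] b) [^] c" using rt_mul[OF d0 that] by simp
    also have "\<dots> = rt (d * b) [^] (b * c)" using rt[of "d * b"] d0 that by (simp add: int_pow_pow)
    also have "\<dots> = rt (b * d) [^] (d * a)" using ad by (simp add: mult.commute)
    also have "\<dots> = (rt (b * d) [^] d) [^] a" using rt[of "b * d"] d0 that by (simp add: int_pow_pow)
    also have "\<dots> = rt b [^] a" using rt_mul[OF that d0] by simp
    finally show ?thesis .
  qed
  have qrep: "\<exists>a b. b > 0 \<and> q = of_int a / of_int b" for q :: rat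
  proof -
    obtain a b where ab: "quotient_of q = (a, b)" by (cases "quotient_of q")
    thus ?thesis using quotient_of_denom_pos quotient_of_div by blast
  qed
  have hom: "psi (q1 + q2) = psi q1 \<otimes> psi q2" for q1 q2
  proof -
    obtain a b where ab: "b > 0" "q1 = of_int a / of_int b" using qrep by blast
    obtain c d where cd: "d > 0" "q2 = of_int c / of_int d" using qrep by blast
    have bd: "b * d > 0" using ab cd by simp
    have qq: "q1 + q2 = of_int (a * d + c * b) / of_int (b * d)" using ab cd by (simp add: field_simps)
    have "psi (q1 + q2) = rt (b * d) [^] (a * d + c * b)" unfolding qq by (rule rep[OF bd])
    also have "\<dots> = rt (b * d) [^] (a * d) \<otimes> rt (b * d) [^] (c * b)"
      by (rule int_pow_mult) (use rt[OF bd] in blast)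
    also have "rt (b * d) [^] (a * d) = rt b [^] a"
    proof -
      have "rt (b * d) [^] (a * d) = (rt (b * d) [^] d) [^] a"
        using int_pow_pow[of "rt (b * d)" d a] rt[OF bd] by (simp add: mult.commute)
      thus ?thesis using rt_mul[OF ab(1) cd(1)] by simp
    qed
    also have "rt (b * d) [^] (c * b) = rt d [^] c"
    proof -
      have r: "rt (b * d) = rt (d * b)" by (simp add: mult.commute)
      have "rt (d * b) [^] (c * b) = (rt (d * b) [^] b) [^] c"
        using int_pow_pow[of "rt (d * b)" b c] rt[of "d * b"] bd by (simp add: mult.commute)
      thus ?thesis using rt_mul[OF cd(1) ab(1)] r by simp
    qed
    finally show ?thesis using rep[OF ab(1)] rep[OF cd(1)] ab(2) cd(2) by simp
  qed
  have inj: "inj_on psi UNIV"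
  proof (rule inj_onI)
    fix q1 q2 :: rat assume eq: "psi q1 = psi q2"
    obtain a b where ab: "b > 0" "q1 = of_int a / of_int b" using qrep by blast
    obtain c d where cd: "d > 0" "q2 = of_int c / of_int d" using qrep by blast
    have bd: "b * d > 0" using ab cd by simp
    have e1: "psi q1 = rt (b * d) [^] (d * a)"
    proof -
      have "psi q1 = (rt (b * d) [^] d) [^] a" using rep[OF ab(1)] ab rt_mul[OF ab(1) cd(1)] by simp
      thus ?thesis using rt[OF bd] by (simp add: int_pow_pow)
    qed
    have e2: "psi q2 = rt (b * d) [^] (b * c)"
    proof -
      have "psi q2 = (rt (d * b) [^] b) [^] c" using rep[OF cd(1)] cd rt_mul[OF cd(1) ab(1)] by simp
      thus ?thesis using rt[of "d * b"] bd by (simp add: int_pow_pow mult.commute)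
    qed
    have "d * a = b * c" using pow_inj[of "rt (b * d)" "d * a" "b * c"] rt[OF bd] rt1[OF bd] eq e1 e2 by simp
    hence "a * d = c * b" by (simp add: mult.commute)
    hence "of_int a * of_int d = (of_int c * of_int b :: rat)" by (metis of_int_mult)
    thus "q1 = q2" unfolding ab(2) cd(2) using ab(1) cd(1) by (simp add: frac_eq_eq)
  qed
  have surj: "psi ` UNIV = V"
  proof
    show "psi ` UNIV \<subseteq> V" using psiV by auto
  next
    show "V \<subseteq> psi ` UNIV"
    proof
      fix w assume w: "w \<in> V"
      obtain h a b where h: "h \<in> V" "g = h [^] (a::int)" "w = h [^] (b::int)" using LC[OF g(1) w] by blast
      have a0: "a \<noteq> 0" using h g by auto
      have "\<exists>h' a' b'. h' \<in> V \<and> a' > 0 \<and> g = h' [^] (a'::int) \<and> w = h' [^] (b'::int)"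
      proof (cases "a > 0")
        case True thus ?thesis using h by blast
      next
        case False
        hence "- a > 0" using a0 by simp
        moreover have "g = inv h [^] (- a)" "w = inv h [^] (- b)" using h
          by (simp_all add: int_pow_neg int_pow_inv)
        ultimately show ?thesis using h by (intro exI[of _ "inv h"] exI[of _ "-a"] exI[of _ "-b"]) auto
      qed
      then obtain h' a' b' where h': "h' \<in> V" "a' > 0" "g = h' [^] (a'::int)" "w = h' [^] (b'::int)" by blast
      have "rt a' = h'" using rt_eq[OF h'(2) h'(1)] h' by simp
      hence "w = psi (of_int b' / of_int a')" using rep[OF h'(2)] h' by simp
      thus "w \<in> psi ` UNIV" by blast
    qed
  qed
  have "psi \<in> hom QQ G" unfolding hom_def using psiV hom by auto
  moreover have "bij_betw psi (carrier QQ) V" using inj surj by (simp add: bij_betw_def)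
  ultimately show ?thesis unfolding iso_def by blast
qed

end

theorem mainTheorem9:
  fixes G :: "('a, 'b) monoid_scheme"
  assumes "group G"
    and "pm_power_graph_iso G rat_add_group"
  shows "G \<cong> rat_add_group"
proof -
  interpret group G by fact
  obtain f where bij: "bij_betw f (carrier G) (carrier QQ)"
    and pres: "\<forall>x\<in>carrier G. \<forall>y\<in>carrier G. pm_power_adj G x y \<longleftrightarrow> pm_power_adj QQ (f x) (f y)"
    using assms(2) unfolding pm_power_graph_iso_def graph_iso_def by blast
  interpret gi: giso "carrier G" "pm_power_adj G" "carrier QQ" "pm_power_adj QQ" f
    by (rule giso.intro[OF bij]) (use pres in blast, (unfold pm_power_adj_def, blast), simp)
  have "(0::rat) \<in> f ` carrier G" by (metis gi.W_eq Qg_simps(1) UNIV_I)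
  then obtain w where w: "w \<in> carrier G" "f w = 0" by (metis imageE)
  have wiso: "\<not> pm_power_adj G w y" for y
  proof
    assume e: "pm_power_adj G w y"
    hence "y \<in> carrier G" unfolding pm_power_adj_def by blast
    hence "pm_power_adj QQ 0 (f y)" using pres e w by auto
    thus False using Q_adj0 by blast
  qed
  have w1: "w = \<one>\<^bsub>G\<^esub>"
  proof (rule ccontr)
    assume wn: "w \<noteq> \<one>\<^bsub>G\<^esub>"
    have w2: "w [^]\<^bsub>G\<^esub> (2::int) = w \<otimes>\<^bsub>G\<^esub> w"
      using int_pow_mult[OF w(1), of 1 1] w(1) by simp
    have ne: "w \<otimes>\<^bsub>G\<^esub> w \<noteq> w" using wn w(1) by simp
    have c2: "w [^]\<^bsub>G\<^esub> (2::int) \<in> carrier G" using w(1) by simp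
    have neq: "w \<noteq> w [^]\<^bsub>G\<^esub> (2::int)" using ne w2 by metis
    have ex: "\<exists>n::int. n \<noteq> 0 \<and> w [^]\<^bsub>G\<^esub> (2::int) = w [^]\<^bsub>G\<^esub> n" by (intro exI[of _ 2]) simp
    have "pm_power_adj G w (w [^]\<^bsub>G\<^esub> (2::int))"
    proof (unfold pm_power_adj_def, intro conjI disjI1)
      show "w \<in> carrier G" by (fact w(1))
      show "w [^]\<^bsub>G\<^esub> (2::int) \<in> carrier G" by (fact c2)
      show "w \<noteq> w [^]\<^bsub>G\<^esub> (2::int)" by (fact neq)
      show "\<exists>n::int. n \<noteq> 0 \<and> w [^]\<^bsub>G\<^esub> (2::int) = w [^]\<^bsub>G\<^esub> n" by (fact ex)
    qed
    thus False using wiso by blast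
  qed
  have tf: "tfgroup G"
  proof unfold_locales
    fix x and n :: int assume x: "x \<in> carrier G" and n: "n \<noteq> 0" and xn: "x [^]\<^bsub>G\<^esub> n = \<one>\<^bsub>G\<^esub>"
    show "x = \<one>\<^bsub>G\<^esub>"
    proof (rule ccontr)
      assume "x \<noteq> \<one>\<^bsub>G\<^esub>"
      hence "pm_power_adj G \<one>\<^bsub>G\<^esub> x"
      proof (unfold pm_power_adj_def, intro conjI disjI2)
        show "\<one>\<^bsub>G\<^esub> \<in> carrier G" by simp
        show "x \<in> carrier G" by (fact x)
        show "\<one>\<^bsub>G\<^esub> \<noteq> x" using \<open>x \<noteq> \<one>\<^bsub>G\<^esub>\<close> by metis
        show "\<exists>na::int. na \<noteq> 0 \<and> \<one>\<^bsub>G\<^esub> = x [^]\<^bsub>G\<^esub> na" using n xn by metis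
      qed
      thus False using wiso w1 by blast
    qed
  qed
  interpret T: tfgroup G by (rule tf)
  interpret Q: tfgroup QQ by (rule Q_tf)
  have fne: "f x \<noteq> 0" if "x \<in> carrier G" "x \<noteq> \<one>\<^bsub>G\<^esub>" for x
    using gi.feq[OF that(1) w(1)] w w1 that by auto
  have LC: "\<exists>z\<in>carrier G. \<exists>a::int. \<exists>b::int. x = z [^]\<^bsub>G\<^esub> a \<and> y = z [^]\<^bsub>G\<^esub> b"
    if x: "x \<in> carrier G" and y: "y \<in> carrier G" for x y
  proof (rule ccontr)
    assume nc: "\<not> (\<exists>z\<in>carrier G. \<exists>a::int. \<exists>b::int. x = z [^]\<^bsub>G\<^esub> a \<and> y = z [^]\<^bsub>G\<^esub> b)"
    have x1: "x \<noteq> \<one>\<^bsub>G\<^esub>" using nc y by (metis int_pow_0 int_pow_1)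
    have y1: "y \<noteq> \<one>\<^bsub>G\<^esub>" using nc x by (metis int_pow_0 int_pow_1)
    have xy: "x \<noteq> y" using nc x by (metis int_pow_1)
    have nE: "\<not> pm_power_adj G x y"
    proof
      assume "pm_power_adj G x y"
      from T.E_cases[OF this] show False
      proof
        assume "\<exists>n. n \<noteq> 0 \<and> y = x [^]\<^bsub>G\<^esub> (n::int)"
        then obtain n :: int where "y = x [^]\<^bsub>G\<^esub> n" by blast
        thus False using nc x by (metis int_pow_1)
      next
        assume "\<exists>n. n \<noteq> 0 \<and> x = y [^]\<^bsub>G\<^esub> (n::int)"
        then obtain n :: int where "x = y [^]\<^bsub>G\<^esub> n" by blast
        thus False using nc y by (metis int_pow_1)
      qed
    qed
    obtain z i j where z: "z \<noteq> (0::rat)" "f x = z [^]\<^bsub>QQ\<^esub> (i::int)" "f y = z [^]\<^bsub>QQ\<^esub> (j::int)"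
      using Q_lc by blast
    have z1: "z \<noteq> \<one>\<^bsub>QQ\<^esub>" using z by simp
    have zV: "z \<in> carrier QQ" by simp
    have i0: "i \<noteq> 0" using z fne[OF x x1] by auto
    have j0: "j \<noteq> 0" using z fne[OF y y1] by auto
    have fxy: "f x \<noteq> f y" using gi.feq[OF x y] xy by simp
    have nEQ: "\<not> pm_power_adj QQ (f x) (f y)" using pres x y nE by blast
    have "i \<noteq> j" using fxy z by auto
    hence ndvd: "\<not> i dvd j" "\<not> j dvd i" using nEQ Q.powE[OF zV z1 i0 j0] z by auto
    obtain u1 u2 u3 where u: "u1 \<in> carrier QQ" "u2 \<in> carrier QQ" "u3 \<in> carrier QQ"
      "u1 \<noteq> u2" "u1 \<noteq> u3" "u2 \<noteq> u3"
      "Univ (carrier QQ) (pm_power_adj QQ) (f x) (f y) u1"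
      "Univ (carrier QQ) (pm_power_adj QQ) (f x) (f y) u2"
      "Univ (carrier QQ) (pm_power_adj QQ) (f x) (f y) u3"
      using Q.three_univ[OF zV z1 i0 j0 ndvd] z by metis
    obtain v1 where v1: "v1 \<in> carrier G" "u1 = f v1" using u(1) gi.W_eq by (metis imageE)
    obtain v2 where v2: "v2 \<in> carrier G" "u2 = f v2" using u(2) gi.W_eq by (metis imageE)
    obtain v3 where v3: "v3 \<in> carrier G" "u3 = f v3" using u(3) gi.W_eq by (metis imageE)
    have U: "Univ (carrier G) (pm_power_adj G) x y v1" "Univ (carrier G) (pm_power_adj G) x y v2"
      "Univ (carrier G) (pm_power_adj G) x y v3"
      using gi.Univ_t[OF x y] u v1 v2 v3 by auto
    have "v1 \<noteq> v2" "v1 \<noteq> v3" "v2 \<noteq> v3" using u v1 v2 v3 by auto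
    thus False using T.loc_cyc_univ[OF x x1 y y1 xy nE nc _ _ _ U] by blast
  qed
  have QD: "\<exists>y\<in>carrier QQ. y [^]\<^bsub>QQ\<^esub> n = z" if "z \<in> carrier QQ" "(n::int) \<noteq> 0" for z n
    using Q_div that(2) by metis
  have PR: "\<exists>y\<in>carrier G. y [^]\<^bsub>G\<^esub> p = x" if x: "x \<in> carrier G" and p: "prime (p::int)" for x p
  proof (cases "x = \<one>\<^bsub>G\<^esub>")
    case True thus ?thesis by (intro bexI[of _ "\<one>\<^bsub>G\<^esub>"]) auto
  next
    case False
    have xp: "x [^]\<^bsub>G\<^esub> p \<in> carrier G" using x by simp
    have "Rc (carrier G) (pm_power_adj G) (x [^]\<^bsub>G\<^esub> p) x" by (rule T.Rc_prime[OF x False p])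
    hence "Rc (carrier QQ) (pm_power_adj QQ) (f (x [^]\<^bsub>G\<^esub> p)) (f x)" using gi.Rc_t[OF xp x] by simp
    hence RQ: "Rc (carrier QQ) (pm_power_adj QQ) (f (x [^]\<^bsub>G\<^esub> p)) (f x)" .
    have "Dprop (carrier QQ) (pm_power_adj QQ) (f x) (f (x [^]\<^bsub>G\<^esub> p))"
    proof (rule Q.Dprop_of_div)
      show "\<And>z n. z \<in> carrier QQ \<Longrightarrow> (n::int) \<noteq> 0 \<Longrightarrow> \<exists>y\<in>carrier QQ. y [^]\<^bsub>QQ\<^esub> n = z"
        by (rule QD)
      show "Rc (carrier QQ) (pm_power_adj QQ) (f (x [^]\<^bsub>G\<^esub> p)) (f x)" by (fact RQ)
    qed
    hence "Dprop (carrier G) (pm_power_adj G) x (x [^]\<^bsub>G\<^esub> p)" using gi.Dprop_t[OF x xp] by simp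
    thus ?thesis by (rule T.root_of_Dprop[OF x False p])
  qed
  have DV: "\<exists>y\<in>carrier G. y [^]\<^bsub>G\<^esub> n = x" if x: "x \<in> carrier G" and n: "(n::int) > 0" for x n
  proof -
    have "\<exists>y\<in>carrier G. y [^]\<^bsub>G\<^esub> (int (nat n)) = x"
      by (rule T.div_all[OF PR x]) (use n in auto)
    thus ?thesis using n by simp
  qed
  have "(1::rat) \<in> f ` carrier G" by (metis gi.W_eq Qg_simps(1) UNIV_I)
  then obtain g where g: "g \<in> carrier G" "f g = 1" by (metis imageE)
  have g1: "g \<noteq> \<one>\<^bsub>G\<^esub>" using g w w1 by auto
  have "\<exists>h. h \<in> iso QQ G" by (rule T.iso_Q[OF LC DV g(1) g1])
  then obtain h where "h \<in> iso QQ G" ..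
  hence "QQ \<cong> G" by (rule is_isoI)
  thus ?thesis by (rule group.iso_sym[OF group_Qg])
qed

end
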